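(* Let $G$ be a $2$-connected cubic multigraph, let $H$ be a peninsula of $G$ with internal port $p$, let $C$ be a core of $H$, and let $e\neq p$ be an edge of $C$. Then for every endpoint $x$ of $p$ there exists a path in $C$ that starts at $x$, does not use $p$, and has $e$ as its last edge.
   Context: Multigraphs are finite and loopless, parallel edges allowed; paths in $C$ may use virtual edges of $C$. A cut of a multigraph $M$ is a bipartition $(U,V(M)\setminus U)$; its cut-set is the set of edges between the sides. A tombolo-cut is a cut whose cut-set (tombolo) has exactly $2$ edges. For a tombolo-cut of $G$ with tombolo $\{a_1b_1,a_2b_2\}$, $a_1,a_2\in U$, the pairs $\{a_1,a_2\}$, $\{b_1,b_2\}$ are its port-pairs. A virtual subgraph of $G$ (on vertex set $X\subseteq V(G)$) is the multigraph on $X$ whose edges are all edges of $G$ with both ends in $X$ (real edges) plus one (possibly parallel) virtual edge $ab$ for every port-pair $\{a,b\}\subseteq X$ of a tombolo of $G$ both of whose edges are not edges of $G$ inside $X$. A peninsula is a virtual subgraph $H$ such that $(V(H),V(G)\setminus V(H))$ is a tombolo-cut, or $H=G$. The internal port of a peninsula $H\ne G$ is its unique virtual edge; if $H=G$ an arbitrary edge is fixed as internal port. A core of a peninsula $H$ with internal port $p=xy$ is obtained as follows: set $C_1=H$; while $C_i$ has a cut $(U,V(C_i)\setminus U)$ whose cut-set (in $C_i$) has exactly $2$ edges, neither of which is $p$, let $C_{i+1}$ be the virtual subgraph of $G$ on $U$ if $\{x,y\}\subseteq U$, and on $V(C_i)\setminus U$ otherwise; when no such cut exists, the current $C_i$ is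 a core. *)

theory Defs
  imports Main
begin

text \<open>A multigraph is given by a vertex set V, an edge set E (edge identities of type 'e)
  and an endpoint map ends; loopless means every edge has exactly two distinct ends.\<close>

definition multigraph :: "'v set \<Rightarrow> 'e set \<Rightarrow> ('e \<Rightarrow> 'v set) \<Rightarrow> bool" where
  "multigraph V E ends \<longleftrightarrow> finite V \<and> finite E \<and> (\<forall>e\<in>E. ends e \<subseteq> V \<and> card (ends e) = 2)"

definition degree :: "'e set \<Rightarrow> ('e \<Rightarrow> 'v set) \<Rightarrow> 'v \<Rightarrow> nat" where
  "degree E ends v = card {e\<in>E. v \<in> ends e}"

definition cubic :: "'v set \<Rightarrow> 'e set \<Rightarrow> ('e \<Rightarrow> 'v set) \<Rightarrow> bool" where
  "cubic V E ends \<longleftrightarrow> (\<forall>v\<in>V. degree E ends v = 3)"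

definition adj_in :: "'e set \<Rightarrow> ('e \<Rightarrow> 'v set) \<Rightarrow> 'v set \<Rightarrow> ('v \<times> 'v) set" where
  "adj_in E ends W = {(u, v). \<exists>e\<in>E. ends e = {u, v} \<and> ends e \<subseteq> W}"

definition connected_on :: "'e set \<Rightarrow> ('e \<Rightarrow> 'v set) \<Rightarrow> 'v set \<Rightarrow> bool" where
  "connected_on E ends W \<longleftrightarrow> W \<noteq> {} \<and> (\<forall>u\<in>W. \<forall>v\<in>W. (u, v) \<in> (adj_in E ends W)\<^sup>*)"

definition two_connected :: "'v set \<Rightarrow> 'e set \<Rightarrow> ('e \<Rightarrow> 'v set) \<Rightarrow> bool" where
  "two_connected V E ends \<longleftrightarrow> card V > 2 \<and> connected_on E ends V
     \<and> (\<forall>v\<in>V. connected_on E ends (V - {v}))"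

definition cut_set :: "'v set \<Rightarrow> 'e set \<Rightarrow> ('e \<Rightarrow> 'v set) \<Rightarrow> 'v set \<Rightarrow> 'e set" where
  "cut_set V E ends U = {e\<in>E. ends e \<inter> U \<noteq> {} \<and> ends e \<inter> (V - U) \<noteq> {}}"

definition tombolo_cut :: "'v set \<Rightarrow> 'e set \<Rightarrow> ('e \<Rightarrow> 'v set) \<Rightarrow> 'v set \<Rightarrow> bool" where
  "tombolo_cut V E ends U \<longleftrightarrow> U \<subseteq> V \<and> card (cut_set V E ends U) = 2"

definition port_pair :: "'v set \<Rightarrow> 'e set \<Rightarrow> ('e \<Rightarrow> 'v set) \<Rightarrow> 'e set \<Rightarrow> 'v set \<Rightarrow> bool" where
  "port_pair V E ends T P \<longleftrightarrow> (\<exists>U. tombolo_cut V E ends U \<and> cut_set V E ends U = T \<and>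
      (P = (\<Union>(ends ` T)) \<inter> U \<or> P = (\<Union>(ends ` T)) \<inter> (V - U)))"

text \<open>Edges of virtual subgraphs: real edges of G, or virtual edges, each virtual edge
  identified by its tombolo T and its port-pair P (its ends).\<close>
datatype ('e, 'v) vedge = Real 'e | Virt "'e set" "'v set"

fun vends :: "('e \<Rightarrow> 'v set) \<Rightarrow> ('e, 'v) vedge \<Rightarrow> 'v set" where
  "vends ends (Real e) = ends e"
| "vends ends (Virt T P) = P"

definition virtual_edges :: "'v set \<Rightarrow> 'e set \<Rightarrow> ('e \<Rightarrow> 'v set) \<Rightarrow> 'v set \<Rightarrow> ('e, 'v) vedge set" where
  "virtual_edges V E ends X =
     {Virt T P | T P. port_pair V E ends T P \<and> P \<subseteq> X \<and> (\<forall>f\<in>T. \<not> ends f \<subseteq> X)}"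

definition vsub_edges :: "'v set \<Rightarrow> 'e set \<Rightarrow> ('e \<Rightarrow> 'v set) \<Rightarrow> 'v set \<Rightarrow> ('e, 'v) vedge set" where
  "vsub_edges V E ends X = Real ` {e\<in>E. ends e \<subseteq> X} \<union> virtual_edges V E ends X"

definition peninsula :: "'v set \<Rightarrow> 'e set \<Rightarrow> ('e \<Rightarrow> 'v set) \<Rightarrow> 'v set \<Rightarrow> bool" where
  "peninsula V E ends X \<longleftrightarrow> tombolo_cut V E ends X \<or> X = V"

definition internal_port :: "'v set \<Rightarrow> 'e set \<Rightarrow> ('e \<Rightarrow> 'v set) \<Rightarrow> 'v set \<Rightarrow> ('e, 'v) vedge \<Rightarrow> bool" where
  "internal_port V E ends X p \<longleftrightarrow>
     (X = V \<and> p \<in> vsub_edges V E ends V) \<or> (X \<noteq> V \<and> virtual_edges V E ends X = {p})"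

definition vcut_set :: "'v set \<Rightarrow> 'e set \<Rightarrow> ('e \<Rightarrow> 'v set) \<Rightarrow> 'v set \<Rightarrow> 'v set \<Rightarrow> ('e, 'v) vedge set" where
  "vcut_set V E ends X U = {f\<in>vsub_edges V E ends X. vends ends f \<inter> U \<noteq> {} \<and> vends ends f \<inter> (X - U) \<noteq> {}}"

definition core_step :: "'v set \<Rightarrow> 'e set \<Rightarrow> ('e \<Rightarrow> 'v set) \<Rightarrow> ('e, 'v) vedge \<Rightarrow> 'v set \<Rightarrow> 'v set \<Rightarrow> bool" where
  "core_step V E ends p X Y \<longleftrightarrow> (\<exists>U. U \<subseteq> X \<and> card (vcut_set V E ends X U) = 2 \<and>
      p \<notin> vcut_set V E ends X U \<and>
      Y = (if vends ends p \<subseteq> U then U else X - U))"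

definition is_core :: "'v set \<Rightarrow> 'e set \<Rightarrow> ('e \<Rightarrow> 'v set) \<Rightarrow> ('e, 'v) vedge \<Rightarrow> 'v set \<Rightarrow> 'v set \<Rightarrow> bool" where
  "is_core V E ends p X Y \<longleftrightarrow> (core_step V E ends p)\<^sup>*\<^sup>* X Y \<and> (\<nexists>Z. core_step V E ends p Y Z)"

definition vpath :: "'v set \<Rightarrow> 'e set \<Rightarrow> ('e \<Rightarrow> 'v set) \<Rightarrow> 'v set \<Rightarrow> 'v list \<Rightarrow> ('e, 'v) vedge list \<Rightarrow> bool" where
  "vpath V E ends Y vs es \<longleftrightarrow> length vs = length es + 1 \<and> distinct vs \<and> set vs \<subseteq> Y \<and>
     (\<forall>i < length es. es ! i \<in> vsub_edges V E ends Y \<and> vends ends (es ! i) = {vs ! i, vs ! Suc i})"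

end

theory Submission
  imports Defs
begin



lemma cross_lemma:
  assumes "(s,t) \<in> r\<^sup>*" "s \<in> S" "t \<notin> S"
  shows "\<exists>u v. (u,v) \<in> r \<and> u \<in> S \<and> v \<notin> S"
  using assms by (induction rule: rtrancl_induct) blast+

locale G =
  fixes V :: "'v set" and E :: "'e set" and ends :: "'e \<Rightarrow> 'v set"
  assumes mg: "multigraph V E ends" and cub: "cubic V E ends" and tc: "two_connected V E ends"
begin

abbreviation cut where "cut S \<equiv> cut_set V E ends S"
abbreviation vsub where "vsub W \<equiv> vsub_edges V E ends W"
abbreviation vcut where "vcut W K \<equiv> vcut_set V E ends W K"

lemma finV: "finite V" and finE: "finite E" using mg unfolding multigraph_def by auto

lemma ends_V: "e \<in> E \<Longrightarrow> ends e \<subseteq> V" using mg unfolding multigraph_def by auto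

lemma two_ends: "e \<in> E \<Longrightarrow> \<exists>a b. a \<noteq> b \<and> ends e = {a,b}"
  using mg unfolding multigraph_def by (metis card_2_iff)

lemma cut_E: "cut S \<subseteq> E" unfolding cut_set_def by auto

lemma fin_cut: "finite (cut S)" using finite_subset[OF cut_E finE] .

lemma cut_compl: "cut (V - S) = cut S"
  unfolding cut_set_def using ends_V by auto

lemma end_in:
  assumes "g \<in> cut S"
  shows "\<exists>c d. c \<noteq> d \<and> ends g = {c,d} \<and> c \<in> S \<and> d \<in> V - S"
proof -
  have gE: "g \<in> E" using assms cut_E by auto
  obtain a b where ab: "a \<noteq> b" "ends g = {a,b}" using two_ends[OF gE] by blast
  have "{a,b} \<subseteq> V" using ends_V[OF gE] ab by auto
  moreover have "{a,b} \<inter> S \<noteq> {}" "{a,b} \<inter> (V - S) \<noteq> {}" using assms ab unfolding cut_set_def by auto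
  ultimately show ?thesis
  proof (cases "a \<in> S")
    case True
    thus ?thesis using ab \<open>{a,b} \<subseteq> V\<close> \<open>{a,b} \<inter> (V - S) \<noteq> {}\<close> by auto
  next
    case False
    hence "b \<in> S" using \<open>{a,b} \<inter> S \<noteq> {}\<close> by auto
    moreover have "a \<in> V - S" using False \<open>{a,b} \<subseteq> V\<close> by auto
    ultimately show ?thesis using ab by (metis insert_commute)
  qed
qed

lemma cv:
  assumes "S \<subseteq> V" "a \<in> S" "V - S \<noteq> {}" "\<forall>g\<in>cut S. a \<in> ends g" "card (cut S) < 3"
  shows False
proof (cases "S = {a}")
  case True
  have "{e\<in>E. a \<in> ends e} \<subseteq> cut S"
  proof
    fix e assume e: "e \<in> {e\<in>E. a \<in> ends e}"
    then obtain c d where cd: "c \<noteq> d" "ends e = {c,d}" using two_ends by blast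
    have "ends e \<subseteq> V" using e ends_V by auto
    then show "e \<in> cut S" using e cd True unfolding cut_set_def by auto
  qed
  hence "card {e\<in>E. a \<in> ends e} \<le> card (cut S)" using fin_cut by (rule card_mono[rotated])
  moreover have "card {e\<in>E. a \<in> ends e} = 3" using cub assms(1,2) unfolding cubic_def degree_def by auto
  ultimately show False using assms(5) by auto
next
  case False
  then obtain s where s: "s \<in> S" "s \<noteq> a" using assms(2) by blast
  obtain t where t: "t \<in> V - S" using assms(3) by blast
  have "a \<in> V" using assms by auto
  hence "connected_on E ends (V - {a})" using tc unfolding two_connected_def by auto
  moreover have "s \<in> V - {a}" "t \<in> V - {a}" using s t assms by auto
  ultimately have "(s,t) \<in> (adj_in E ends (V - {a}))\<^sup>*" unfolding connected_on_def by auto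
  then obtain u v where uv: "(u,v) \<in> adj_in E ends (V - {a})" "u \<in> S" "v \<notin> S"
    using cross_lemma[of s t "adj_in E ends (V - {a})" S] s t by blast
  then obtain e where e: "e \<in> E" "ends e = {u,v}" "ends e \<subseteq> V - {a}" unfolding adj_in_def by auto
  hence "e \<in> cut S" using uv unfolding cut_set_def by auto
  thus False using assms(4) e by auto
qed

lemma two_edge:
  assumes "S \<subseteq> V" "S \<noteq> {}" "V - S \<noteq> {}"
  shows "2 \<le> card (cut S)"
proof (rule ccontr)
  assume "\<not> 2 \<le> card (cut S)"
  hence c: "card (cut S) \<le> 1" by auto
  show False
  proof (cases "cut S = {}")
    case True
    obtain a where "a \<in> S" using assms by blast
    thus False using cv[OF assms(1) _ assms(3)] True by auto
  next
    case False
    then obtain g where g: "cut S = {g}" using c fin_cut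
      by (metis One_nat_def card_1_singletonE card_0_eq le_SucE le_zero_eq)
    then obtain c d where "ends g = {c,d}" "c \<in> S" using end_in by blast
    thus False using cv[OF assms(1) _ assms(3), of c] g by auto
  qed
qed

lemma port_card:
  assumes "S \<subseteq> V" "card (cut S) = 2"
  shows "card (\<Union>(ends ` cut S) \<inter> S) = 2"
proof -
  obtain t1 t2 where t: "t1 \<noteq> t2" "cut S = {t1,t2}" using assms(2) by (auto simp: card_2_iff)
  obtain c1 d1 where 1: "c1 \<noteq> d1" "ends t1 = {c1,d1}" "c1 \<in> S" "d1 \<in> V - S" using end_in t by blast
  obtain c2 d2 where 2: "c2 \<noteq> d2" "ends t2 = {c2,d2}" "c2 \<in> S" "d2 \<in> V - S" using end_in t by blast
  have eq: "\<Union>(ends ` cut S) \<inter> S = {c1,c2}" using 1 2 t by auto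
  have "c1 \<noteq> c2"
  proof
    assume "c1 = c2"
    thus False using cv[OF assms(1) 1(3)] 1 2 t assms(2) by auto
  qed
  thus ?thesis using eq by auto
qed

lemma virt_mem: "f \<in> virtual_edges V E ends W \<longleftrightarrow>
   (\<exists>T P. f = Virt T P \<and> port_pair V E ends T P \<and> P \<subseteq> W \<and> (\<forall>g\<in>T. \<not> ends g \<subseteq> W))"
  unfolding virtual_edges_def by blast

lemma vsub_mem: "f \<in> vsub W \<longleftrightarrow> (\<exists>e. f = Real e \<and> e \<in> E \<and> ends e \<subseteq> W) \<or> f \<in> virtual_edges V E ends W"
  unfolding vsub_edges_def by blast

lemma vends_card:
  assumes "f \<in> vsub W" shows "card (vends ends f) = 2"
proof (cases f)
  case (Real e)
  thus ?thesis using assms mg unfolding vsub_mem virt_mem multigraph_def by auto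
next
  case (Virt T P)
  hence "port_pair V E ends T P" using assms unfolding vsub_mem virt_mem by auto
  then obtain U where U: "tombolo_cut V E ends U" "cut U = T"
    "P = \<Union>(ends ` T) \<inter> U \<or> P = \<Union>(ends ` T) \<inter> (V - U)" unfolding port_pair_def by blast
  have U1: "U \<subseteq> V" "card (cut U) = 2" using U(1) unfolding tombolo_cut_def by auto
  show ?thesis
  proof (cases "P = \<Union>(ends ` T) \<inter> U")
    case True
    thus ?thesis using port_card[OF U1] U Virt by simp
  next
    case False
    hence P: "P = \<Union>(ends ` cut (V - U)) \<inter> (V - U)" using U cut_compl by auto
    have "card (cut (V - U)) = 2" using U1 cut_compl by simp
    thus ?thesis using port_card[of "V - U"] P Virt by auto
  qed
qed

lemma vsub_vends: "f \<in> vsub W \<Longrightarrow> vends ends f \<subseteq> W"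
  unfolding vsub_mem virt_mem by auto

lemma vsub_mono:
  assumes "f \<in> vsub W" "vends ends f \<subseteq> W'" "W' \<subseteq> W" shows "f \<in> vsub W'"
proof (cases f)
  case (Real e)
  thus ?thesis using assms unfolding vsub_mem virt_mem by auto
next
  case (Virt T P)
  hence "port_pair V E ends T P" "\<forall>g\<in>T. \<not> ends g \<subseteq> W"
    using assms(1) unfolding vsub_mem virt_mem by auto
  moreover have "P \<subseteq> W'" using assms(2) Virt by simp
  ultimately have "\<forall>g\<in>T. \<not> ends g \<subseteq> W'" using assms(3) by blast
  thus ?thesis unfolding vsub_mem virt_mem using Virt \<open>P \<subseteq> W'\<close> \<open>port_pair V E ends T P\<close> by blast
qed

lemma vcut_sym: assumes "U \<subseteq> W" shows "vcut W (W - U) = vcut W U"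
proof -
  have "W - (W - U) = U" using assms by blast
  hence "vcut W (W - U) = {f \<in> vsub W. vends ends f \<inter> (W - U) \<noteq> {} \<and> vends ends f \<inter> U \<noteq> {}}"
    unfolding vcut_set_def by simp
  thus ?thesis unfolding vcut_set_def by blast
qed

lemma fin_vsub:
  assumes "W \<subseteq> V" shows "finite (vsub W)"
proof -
  have sub: "virtual_edges V E ends W \<subseteq> (\<lambda>(T,P). Virt T P) ` (Pow E \<times> Pow V)"
  proof
    fix f assume "f \<in> virtual_edges V E ends W"
    then obtain T P where f: "f = Virt T P" "port_pair V E ends T P" "P \<subseteq> W"
      unfolding virt_mem by auto
    obtain U where "cut U = T" using f(2) unfolding port_pair_def by auto
    hence "T \<subseteq> E" using cut_E by auto
    moreover have "P \<subseteq> V" using f(3) assms by auto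
    ultimately have "(T,P) \<in> Pow E \<times> Pow V" by auto
    thus "f \<in> (\<lambda>(T,P). Virt T P) ` (Pow E \<times> Pow V)" using f(1) by force
  qed
  have "finite (Pow E \<times> Pow V)" using finE finV by simp
  hence "finite (virtual_edges V E ends W)" using sub finite_surj by blast
  moreover have "finite (Real ` {e\<in>E. ends e \<subseteq> W})" using finE by simp
  ultimately show ?thesis unfolding vsub_edges_def by simp
qed

end


context G begin

definition pb :: "'v set \<Rightarrow> 'v set" where
  "pb B = \<Union>(ends ` cut B) \<inter> (V - B)"

definition struct :: "'v set \<Rightarrow> 'v set set \<Rightarrow> bool" where
  "struct W BB \<longleftrightarrow> W \<subseteq> V \<and> (\<forall>B\<in>BB. B \<subseteq> V - W \<and> card (cut B) = 2 \<and> pb B \<subseteq> W)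
     \<and> (\<forall>B\<in>BB. \<forall>B'\<in>BB. B \<noteq> B' \<longrightarrow> B \<inter> B' = {}) \<and> \<Union>BB = V - W"

lemma piece_virt:
  assumes "B \<subseteq> V - W" "card (cut B) = 2" "pb B \<subseteq> W"
  shows "Virt (cut B) (pb B) \<in> vsub W"
proof -
  have "tombolo_cut V E ends B" using assms unfolding tombolo_cut_def by auto
  hence "port_pair V E ends (cut B) (pb B)" unfolding port_pair_def pb_def by blast
  moreover have "\<forall>g\<in>cut B. \<not> ends g \<subseteq> W"
  proof
    fix g assume "g \<in> cut B"
    then obtain c d where "ends g = {c,d}" "c \<in> B" using end_in by blast
    thus "\<not> ends g \<subseteq> W" using assms(1) by auto
  qed
  ultimately show ?thesis unfolding vsub_mem virt_mem using assms(3) by blast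
qed

lemma realize:
  assumes st: "struct W BB" and KW: "K \<subseteq> W"
  defines "S \<equiv> K \<union> \<Union>{B\<in>BB. pb B \<inter> K \<noteq> {}}"
  shows "S \<subseteq> V" "S \<inter> W = K" "\<forall>g\<in>cut S. ends g - S \<subseteq> W - K"
    "card (cut S) \<le> card (vcut W K)"
proof -
  have WV: "W \<subseteq> V" and BB: "\<And>B. B \<in> BB \<Longrightarrow> B \<subseteq> V - W \<and> card (cut B) = 2 \<and> pb B \<subseteq> W"
    and dj: "\<And>B B'. B \<in> BB \<Longrightarrow> B' \<in> BB \<Longrightarrow> B \<noteq> B' \<Longrightarrow> B \<inter> B' = {}"
    and un: "\<Union>BB = V - W" using st unfolding struct_def by auto
  show SV: "S \<subseteq> V" unfolding S_def using KW WV BB by blast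
  show SW: "S \<inter> W = K" unfolding S_def using KW BB by blast
  have pin: "\<And>B. B \<in> BB \<Longrightarrow> pb B \<inter> K \<noteq> {} \<Longrightarrow> B \<subseteq> S" unfolding S_def by blast
  have pout: "\<And>B. B \<in> BB \<Longrightarrow> pb B \<inter> K = {} \<Longrightarrow> B \<inter> S = {}"
  proof -
    fix B assume B: "B \<in> BB" "pb B \<inter> K = {}"
    have "B \<inter> K = {}" using BB[OF B(1)] KW by blast
    moreover have "B \<inter> B' = {}" if "B' \<in> BB" "pb B' \<inter> K \<noteq> {}" for B'
      using dj[OF B(1) that(1)] that B(2) by blast
    ultimately show "B \<inter> S = {}" unfolding S_def by blast
  qed
  define Qp where "Qp g B c d \<longleftrightarrow> B \<in> BB \<and> ends g = {c,d} \<and> c \<in> B \<and> B \<subseteq> S \<and> d \<in> W - K \<and> g \<in> cut B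
      \<and> pb B \<inter> K \<noteq> {} \<and> (\<forall>B'\<in>BB. ends g \<inter> B' \<noteq> {} \<longrightarrow> B' = B)" for g B c d
  have Qp1: "B \<in> BB" and Qp2: "ends g = {c,d}" and Qp3: "c \<in> B" and Qp4: "B \<subseteq> S"
    and Qp5: "d \<in> W - K" and Qp6: "g \<in> cut B" and Qp7: "pb B \<inter> K \<noteq> {}"
    and Qp8: "\<forall>B'\<in>BB. ends g \<inter> B' \<noteq> {} \<longrightarrow> B' = B" if "Qp g B c d" for g B c d
    using that unfolding Qp_def by blast+
  have key: "\<exists>B c d. Qp g B c d"
    if g: "g \<in> cut S" "\<not> ends g \<subseteq> W" for g
  proof -
    have gE: "g \<in> E" using g cut_E by auto
    obtain c where c: "c \<in> ends g" "c \<notin> W" using g by auto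
    have "c \<in> V" using c ends_V[OF gE] by auto
    then obtain B where B: "B \<in> BB" "c \<in> B" using un c by blast
    obtain a b where ab: "a \<noteq> b" "ends g = {a,b}" using two_ends[OF gE] by blast
    define d where "d = (if c = a then b else a)"
    have cd: "ends g = {c,d}" "c \<noteq> d" using ab c unfolding d_def by auto
    have gS: "ends g \<inter> S \<noteq> {}" "ends g \<inter> (V - S) \<noteq> {}" using g(1) unfolding cut_set_def by auto
    have "d \<notin> B"
    proof
      assume "d \<in> B"
      hence "ends g \<subseteq> B" using cd B by auto
      thus False using gS pin[OF B(1)] pout[OF B(1)] by blast
    qed
    have dV: "d \<in> V" using cd ends_V[OF gE] by auto
    have gB: "g \<in> cut B" using gE cd B \<open>d \<notin> B\<close> dV unfolding cut_set_def by auto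
    hence dpb: "d \<in> pb B" using cd \<open>d \<notin> B\<close> dV unfolding pb_def by auto
    hence dW: "d \<in> W" using BB[OF B(1)] by auto
    have pK: "pb B \<inter> K \<noteq> {}"
    proof
      assume pK: "pb B \<inter> K = {}"
      hence "c \<notin> S" using pout[OF B(1)] B by auto
      hence "d \<in> S" using gS cd by auto
      hence "d \<in> K" using SW dW by auto
      thus False using pK dpb by auto
    qed
    hence BS: "B \<subseteq> S" using pin B by auto
    hence "d \<notin> S" using gS cd B by auto
    hence dWK: "d \<in> W - K" using dW SW by auto
    have uniq: "\<forall>B'\<in>BB. ends g \<inter> B' \<noteq> {} \<longrightarrow> B' = B"
    proof (intro ballI impI)
      fix B' assume B': "B' \<in> BB" "ends g \<inter> B' \<noteq> {}"
      have "d \<notin> B'" using BB[OF B'(1)] dW by auto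
      hence "c \<in> B'" using B' cd by auto
      thus "B' = B" using dj[OF B(1) B'(1)] B by auto
    qed
    have "Qp g B c d" unfolding Qp_def by (intro conjI B(1) cd(1) B(2) BS dWK gB pK uniq)
    thus ?thesis by blast
  qed
  define pc where "pc g = (SOME B. B \<in> BB \<and> ends g \<inter> B \<noteq> {})" for g
  define phi where "phi g = (if ends g \<subseteq> W then Real g else Virt (cut (pc g)) (pb (pc g)))" for g
  have pc: "\<exists>c d. Qp g (pc g) c d"
    if g: "g \<in> cut S" "\<not> ends g \<subseteq> W" for g
  proof -
    obtain B c d where Q: "Qp g B c d" using key[OF g] by blast
    note B = Qp1[OF Q] Qp2[OF Q] Qp3[OF Q] Qp8[OF Q]
    have "B \<in> BB \<and> ends g \<inter> B \<noteq> {}" using B(1,2,3) by auto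
    hence "pc g \<in> BB \<and> ends g \<inter> pc g \<noteq> {}" unfolding pc_def by (rule someI)
    hence "pc g = B" using B(4)[rule_format] by (elim conjE)
    thus ?thesis using Q by blast
  qed
  show "\<forall>g\<in>cut S. ends g - S \<subseteq> W - K"
  proof
    fix g assume g: "g \<in> cut S"
    show "ends g - S \<subseteq> W - K"
    proof (cases "ends g \<subseteq> W")
      case True thus ?thesis using SW by auto
    next
      case False
      then obtain c d where Q: "Qp g (pc g) c d" using pc[OF g] by blast
      note q = Qp2[OF Q] Qp3[OF Q] Qp4[OF Q] Qp5[OF Q]
      show ?thesis using q by auto
    qed
  qed
  have into: "phi g \<in> vcut W K" if g: "g \<in> cut S" for g
  proof (cases "ends g \<subseteq> W")
    case True
    have gE: "g \<in> E" using g cut_E by auto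
    hence "Real g \<in> vsub W" using True unfolding vsub_mem by auto
    moreover have "ends g \<inter> K \<noteq> {}" "ends g \<inter> (W - K) \<noteq> {}"
      using g True SW SV unfolding cut_set_def by auto
    ultimately show ?thesis unfolding phi_def vcut_set_def using True by simp
  next
    case False
    then obtain c d where Q: "Qp g (pc g) c d" using pc[OF g] by blast
    note cd = Qp2[OF Q] Qp3[OF Q] Qp4[OF Q] Qp5[OF Q] Qp6[OF Q] Qp7[OF Q]
    note pcB = Qp1[OF Q]
    have "Virt (cut (pc g)) (pb (pc g)) \<in> vsub W" using BB[OF pcB] by (intro piece_virt) auto
    moreover have "d \<in> pb (pc g)"
    proof -
      have "d \<notin> pc g" using cd BB[OF pcB] by auto
      moreover have "d \<in> V" using cd WV by auto
      ultimately show ?thesis using cd unfolding pb_def by auto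
    qed
    ultimately show ?thesis unfolding phi_def vcut_set_def using False cd by auto
  qed
  have inj: "inj_on phi (cut S)"
  proof
    fix g1 g2 assume g: "g1 \<in> cut S" "g2 \<in> cut S" "phi g1 = phi g2"
    show "g1 = g2"
    proof (cases "ends g1 \<subseteq> W")
      case True
      hence "phi g1 = Real g1" unfolding phi_def by simp
      moreover have "ends g2 \<subseteq> W" using g True \<open>phi g1 = Real g1\<close> unfolding phi_def
        by (metis vedge.distinct(1))
      ultimately show ?thesis using g unfolding phi_def by simp
    next
      case False
      hence n2: "\<not> ends g2 \<subseteq> W" using g unfolding phi_def by (metis vedge.distinct(1))
      have eq: "cut (pc g1) = cut (pc g2)" using g False n2 unfolding phi_def by simp
      obtain c1 d1 where Q1: "Qp g1 (pc g1) c1 d1" using pc[OF g(1) False] by blast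
      note 1 = Qp2[OF Q1] Qp3[OF Q1] Qp4[OF Q1] Qp5[OF Q1] Qp6[OF Q1] Qp7[OF Q1] Qp8[OF Q1]
      note p1 = Qp1[OF Q1]
      obtain c2 d2 where Q2: "Qp g2 (pc g2) c2 d2" using pc[OF g(2) n2] by blast
      note 2 = Qp2[OF Q2] Qp3[OF Q2] Qp4[OF Q2] Qp5[OF Q2] Qp6[OF Q2]
      note p2 = Qp1[OF Q2]
      have "g1 \<in> cut (pc g2)" using 1 eq by auto
      hence "ends g1 \<inter> pc g2 \<noteq> {}" unfolding cut_set_def by auto
      hence same: "pc g2 = pc g1" using 1(7) p2 by auto
      show "g1 = g2"
      proof (rule ccontr)
        assume ne: "g1 \<noteq> g2"
        let ?B = "pc g1"
        have "{g1,g2} \<subseteq> cut ?B" using 1 2 same by auto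
        moreover have "card (cut ?B) = 2" using BB[OF p1] by auto
        ultimately have cB: "cut ?B = {g1,g2}" using ne fin_cut
          by (metis card_2_iff card_subset_eq finite.emptyI finite.insertI)
        have "d1 \<notin> ?B" "d2 \<notin> ?B" using 1 2 BB[OF p1] by auto
        hence "pb ?B \<subseteq> {d1,d2}" unfolding pb_def using cB 1 2 same by auto
        thus False using 1(4,6) 2(4) by auto
      qed
    qed
  qed
  show "card (cut S) \<le> card (vcut W K)"
  proof (rule card_inj_on_le[OF inj])
    show "phi ` cut S \<subseteq> vcut W K" using into by auto
    show "finite (vcut W K)" using fin_vsub[OF WV] unfolding vcut_set_def by simp
  qed
qed

end


context G begin

lemma step_struct:
  assumes st: "struct W BB" and cs: "core_step V E ends p W W'"
  shows "\<exists>BB'. struct W' BB'"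
proof -
  obtain U where U: "U \<subseteq> W" "card (vcut W U) = 2" "p \<notin> vcut W U"
    "W' = (if vends ends p \<subseteq> U then U else W - U)" using cs unfolding core_step_def by blast
  have WV: "W \<subseteq> V" and BB: "\<And>B. B \<in> BB \<Longrightarrow> B \<subseteq> V - W \<and> card (cut B) = 2 \<and> pb B \<subseteq> W"
    and dj: "\<And>B B'. B \<in> BB \<Longrightarrow> B' \<in> BB \<Longrightarrow> B \<noteq> B' \<Longrightarrow> B \<inter> B' = {}"
    and un: "\<Union>BB = V - W" using st unfolding struct_def by auto
  have W'W: "W' \<subseteq> W" using U by auto
  define Z where "Z = W - W'"
  have ZW: "Z \<subseteq> W" unfolding Z_def by auto
  have W'Z: "W - Z = W'" unfolding Z_def using W'W by auto
  have vZ: "vcut W Z = vcut W U"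
  proof (cases "vends ends p \<subseteq> U")
    case True
    hence "Z = W - U" unfolding Z_def using U by auto
    thus ?thesis using vcut_sym[OF U(1)] by simp
  next
    case False
    hence "Z = U" unfolding Z_def using U by auto
    thus ?thesis by simp
  qed
  hence c2: "card (vcut W Z) = 2" using U by simp
  then obtain f where "f \<in> vcut W Z" by (metis card.empty ex_in_conv zero_neq_numeral)
  hence f: "vends ends f \<inter> Z \<noteq> {}" "vends ends f \<inter> W' \<noteq> {}" using W'Z unfolding vcut_set_def by auto
  define M where "M = Z \<union> \<Union>{B\<in>BB. pb B \<inter> Z \<noteq> {}}"
  note R = realize[OF st ZW, folded M_def]
  have MV: "M \<subseteq> V" and MW: "M \<inter> W = Z" using R by auto
  have "M \<noteq> {}" using f MW by auto
  moreover have "W' \<subseteq> V - M" using MW W'W WV Z_def by auto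
  moreover have "W' \<noteq> {}" using f by auto
  ultimately have "2 \<le> card (cut M)" using two_edge[OF MV] by auto
  hence cM: "card (cut M) = 2" using R(4) c2 by simp
  have pbM: "pb M \<subseteq> W'"
  proof
    fix y assume "y \<in> pb M"
    then obtain g where g: "g \<in> cut M" "y \<in> ends g" "y \<notin> M" unfolding pb_def by auto
    thus "y \<in> W'" using R(3) W'Z by blast
  qed
  define BB' where "BB' = insert M {B\<in>BB. pb B \<inter> Z = {}}"
  have old_dis: "B \<inter> M = {}" if B: "B \<in> BB" "pb B \<inter> Z = {}" for B
  proof -
    have "B \<inter> Z = {}" using BB[OF B(1)] ZW by blast
    moreover have "B \<inter> B' = {}" if "B' \<in> BB" "pb B' \<inter> Z \<noteq> {}" for B'
      using dj[OF B(1) that(1)] that B(2) by blast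
    ultimately show ?thesis unfolding M_def by blast
  qed
  have "struct W' BB'"
    unfolding struct_def
  proof (intro conjI)
    show "W' \<subseteq> V" using W'W WV by auto
    show "\<forall>B\<in>BB'. B \<subseteq> V - W' \<and> card (cut B) = 2 \<and> pb B \<subseteq> W'"
    proof
      fix B assume "B \<in> BB'"
      then consider "B = M" | "B \<in> BB" "pb B \<inter> Z = {}" unfolding BB'_def by blast
      thus "B \<subseteq> V - W' \<and> card (cut B) = 2 \<and> pb B \<subseteq> W'"
      proof cases
        case 1 thus ?thesis using \<open>W' \<subseteq> V - M\<close> MV cM pbM by auto
      next
        case 2 thus ?thesis using BB[OF 2(1)] W'W W'Z by auto
      qed
    qed
    show "\<forall>B\<in>BB'. \<forall>B'\<in>BB'. B \<noteq> B' \<longrightarrow> B \<inter> B' = {}"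
      unfolding BB'_def using old_dis dj by blast
    show "\<Union>BB' = V - W'"
    proof
      show "\<Union>BB' \<subseteq> V - W'" unfolding BB'_def using \<open>W' \<subseteq> V - M\<close> MV BB W'W by blast
      show "V - W' \<subseteq> \<Union>BB'"
      proof
        fix y assume y: "y \<in> V - W'"
        show "y \<in> \<Union>BB'"
        proof (cases "y \<in> W")
          case True
          hence "y \<in> M" using y unfolding M_def Z_def by auto
          thus ?thesis unfolding BB'_def by auto
        next
          case False
          then obtain B where B: "B \<in> BB" "y \<in> B" using un y by blast
          show ?thesis
          proof (cases "pb B \<inter> Z = {}")
            case True thus ?thesis using B unfolding BB'_def by auto
          next
            case False
            hence "y \<in> M" using B unfolding M_def by auto
            thus ?thesis unfolding BB'_def by auto
          qed
        qed
      qed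
    qed
  qed
  thus ?thesis by blast
qed

lemma step_port:
  assumes "p \<in> vsub W" "core_step V E ends p W W'"
  shows "p \<in> vsub W'"
proof -
  obtain U where U: "U \<subseteq> W" "p \<notin> vcut W U"
    "W' = (if vends ends p \<subseteq> U then U else W - U)" using assms(2) unfolding core_step_def by blast
  have pW: "vends ends p \<subseteq> W" using vsub_vends[OF assms(1)] .
  have "vends ends p \<subseteq> W'"
  proof (cases "vends ends p \<subseteq> U")
    case True thus ?thesis using U by simp
  next
    case False
    hence "vends ends p \<inter> (W - U) \<noteq> {}" using pW by auto
    hence "vends ends p \<inter> U = {}" using U(2) assms(1) unfolding vcut_set_def by auto
    thus ?thesis using U False pW by auto
  qed
  moreover have "W' \<subseteq> W" using U by auto
  ultimately show ?thesis using vsub_mono[OF assms(1)] by blast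
qed

lemma init_struct:
  assumes "peninsula V E ends X"
  shows "\<exists>BB. struct X BB"
proof (cases "X = V")
  case True
  hence "struct X {}" unfolding struct_def by auto
  thus ?thesis by blast
next
  case False
  hence tb: "X \<subseteq> V" "card (cut X) = 2" using assms unfolding peninsula_def tombolo_cut_def by auto
  have "V - (V - X) = X" using tb by auto
  hence "pb (V - X) \<subseteq> X" unfolding pb_def by auto
  moreover have "card (cut (V - X)) = 2" using tb cut_compl by simp
  ultimately have "struct X {V - X}" unfolding struct_def using tb by auto
  thus ?thesis by blast
qed

lemma chain:
  assumes "(core_step V E ends p)\<^sup>*\<^sup>* X Y" "\<exists>BB. struct X BB" "p \<in> vsub X"
  shows "(\<exists>BB. struct Y BB) \<and> p \<in> vsub Y"
  using assms
proof (induction rule: rtranclp_induct)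
  case base thus ?case by simp
next
  case (step y z)
  thus ?case using step_struct step_port by blast
qed

end



lemma vpath_take:
  assumes "vpath V E ends Y vs es" "i < length vs"
  shows "vpath V E ends Y (take (Suc i) vs) (take i es)"
  using assms unfolding vpath_def
  by (auto simp: min_def dest: in_set_takeD)

lemma vpath_snoc:
  assumes "vpath V E ends Y vs es" "w \<notin> set vs" "w \<in> Y" "f \<in> vsub_edges V E ends Y"
    "vends ends f = {last vs, w}"
  shows "vpath V E ends Y (vs @ [w]) (es @ [f])"
proof -
  have L: "length vs = length es + 1" and vsne: "vs \<noteq> []" using assms(1) unfolding vpath_def by auto
  have lastv: "last vs = vs ! length es" using L vsne by (simp add: last_conv_nth)
  have len: "length (vs @ [w]) = length (es @ [f]) + 1" using L by simp
  have dist: "distinct (vs @ [w])" using assms(1,2) unfolding vpath_def by simp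
  have sY: "set (vs @ [w]) \<subseteq> Y" using assms(1,3) unfolding vpath_def by simp
  have edges: "\<forall>j < length (es @ [f]). (es @ [f]) ! j \<in> vsub_edges V E ends Y \<and>
       vends ends ((es @ [f]) ! j) = {(vs @ [w]) ! j, (vs @ [w]) ! Suc j}"
  proof (intro allI impI)
    fix j assume j: "j < length (es @ [f])"
    show "(es @ [f]) ! j \<in> vsub_edges V E ends Y \<and>
       vends ends ((es @ [f]) ! j) = {(vs @ [w]) ! j, (vs @ [w]) ! Suc j}"
    proof (cases "j < length es")
      case True
      thus ?thesis using assms(1) L unfolding vpath_def by (simp add: nth_append)
    next
      case False
      hence "j = length es" using j by simp
      thus ?thesis using assms(4,5) L lastv by (simp add: nth_append)
    qed
  qed
  show ?thesis unfolding vpath_def by (intro conjI len dist sY edges)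
qed

context G begin

lemma reach_path:
  assumes "(x,t) \<in> {(a,b). \<exists>f \<in> vsub Y - {p}. vends ends f = {a,b}}\<^sup>*" "x \<in> Y"
  shows "\<exists>vs es. vpath V E ends Y vs es \<and> hd vs = x \<and> last vs = t \<and> p \<notin> set es"
  using assms(1)
proof (induction rule: rtrancl_induct)
  case base
  have "vpath V E ends Y [x] []" using assms(2) unfolding vpath_def by simp
  thus ?case by fastforce
next
  case (step y z)
  obtain vs es where P: "vpath V E ends Y vs es" "hd vs = x" "last vs = y" "p \<notin> set es"
    using step.IH by blast
  obtain f where f: "f \<in> vsub Y" "f \<noteq> p" "vends ends f = {y,z}" using step.hyps(2) by blast
  have zY: "z \<in> Y" using vsub_vends[OF f(1)] f(3) by auto
  show ?case
  proof (cases "z \<in> set vs")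
    case True
    then obtain i where i: "i < length vs" "vs ! i = z" by (auto simp: in_set_conv_nth)
    have "vpath V E ends Y (take (Suc i) vs) (take i es)" using vpath_take[OF P(1) i(1)] .
    moreover have "hd (take (Suc i) vs) = x" using P(2) i(1) by (simp add: hd_conv_nth)
    moreover have "last (take (Suc i) vs) = z" using i by (simp add: take_Suc_conv_app_nth)
    moreover have "p \<notin> set (take i es)" using P(4) by (auto dest: in_set_takeD)
    ultimately show ?thesis by blast
  next
    case False
    have "vpath V E ends Y (vs @ [z]) (es @ [f])" using vpath_snoc[OF P(1) False zY f(1)] f(3) P(3) by simp
    moreover have "vs \<noteq> []" using P(1) unfolding vpath_def by auto
    ultimately have "hd (vs @ [z]) = x" "last (vs @ [z]) = z" "p \<notin> set (es @ [f])"
      using P f(2) by auto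
    thus ?thesis using \<open>vpath V E ends Y (vs @ [z]) (es @ [f])\<close> by blast
  qed
qed

end

theorem lemma20:
  fixes V :: "'v set" and E :: "'e set" and ends :: "'e \<Rightarrow> 'v set"
    and X Y :: "'v set" and p e :: "('e, 'v) vedge" and x :: 'v
  assumes "multigraph V E ends"
    and "cubic V E ends"
    and "two_connected V E ends"
    and "peninsula V E ends X"
    and "internal_port V E ends X p"
    and "is_core V E ends p X Y"
    and "e \<in> vsub_edges V E ends Y" and "e \<noteq> p"
    and "x \<in> vends ends p"
  shows "\<exists>vs es. vpath V E ends Y vs es \<and> hd vs = x \<and> es \<noteq> [] \<and> p \<notin> set es \<and> last es = e"
proof -
  interpret G V E ends using assms(1-3) by unfold_locales
  have pX: "p \<in> vsub X" using assms(5) unfolding internal_port_def vsub_edges_def by auto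
  have "(\<exists>BB. struct Y BB) \<and> p \<in> vsub Y"
    using chain[of p X Y] assms(6) init_struct[OF assms(4)] pX unfolding is_core_def by blast
  then obtain BB where st: "struct Y BB" and pY: "p \<in> vsub Y" by blast
  have YV: "Y \<subseteq> V" using st unfolding struct_def by auto
  have xY: "x \<in> Y" using vsub_vends[OF pY] assms(9) by auto
  obtain u v where uv: "u \<noteq> v" "vends ends e = {u,v}"
    using vends_card[OF assms(7)] by (auto simp: card_2_iff)
  have "vends ends e \<subseteq> Y" using vsub_vends[OF assms(7)] .
  hence uvY: "u \<in> Y" "v \<in> Y" using uv(2) by blast+
  define A where "A = {(a,b). \<exists>f \<in> vsub Y - {p}. vends ends f = {a,b}}"
  define R where "R = {w \<in> Y. (x,w) \<in> A\<^sup>*}"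
  have "vends ends e = {v,u}" using uv(2) by (simp add: insert_commute)
  hence eA: "(v,u) \<in> A" using assms(7,8) unfolding A_def by blast
  have uR: "u \<in> R"
  proof (rule ccontr)
    assume nu: "u \<notin> R"
    have nv: "v \<notin> R"
    proof
      assume "v \<in> R"
      hence "(x,v) \<in> A\<^sup>*" unfolding R_def by blast
      hence "(x,u) \<in> A\<^sup>*" using eA by (rule rtrancl.rtrancl_into_rtrancl)
      thus False using nu uvY(1) unfolding R_def by blast
    qed
    have RY: "R \<subseteq> Y" unfolding R_def by auto
    have sub: "vcut Y R \<subseteq> {p}"
    proof
      fix f assume f: "f \<in> vcut Y R"
      show "f \<in> {p}"
      proof (rule ccontr)
        assume "f \<notin> {p}"
        obtain a b where ab: "a \<in> vends ends f" "a \<in> R" "b \<in> vends ends f" "b \<in> Y" "b \<notin> R"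
          using f unfolding vcut_set_def by auto
        have fv: "f \<in> vsub Y" using f unfolding vcut_set_def by auto
        have "a \<noteq> b" using ab by auto
        hence "vends ends f = {a,b}" using vends_card[OF fv] ab
          by (metis card_2_iff insert_commute insertE singletonD)
        hence "(a,b) \<in> A" unfolding A_def using fv \<open>f \<notin> {p}\<close> by auto
        hence "(x,b) \<in> A\<^sup>*" using ab(2) unfolding R_def by auto
        thus False using ab unfolding R_def by auto
      qed
    qed
    have "card (vcut Y R) \<le> 1" using card_mono[OF _ sub] by auto
    define S where "S = R \<union> \<Union>{B\<in>BB. pb B \<inter> R \<noteq> {}}"
    note RR = realize[OF st RY, folded S_def]
    have "x \<in> R" unfolding R_def using xY by auto
    hence "S \<noteq> {}" using RR(2) by auto
    moreover have "u \<in> V - S" using RR(2) uvY nu YV by auto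
    ultimately have "2 \<le> card (cut S)" using two_edge[OF RR(1)] by auto
    thus False using RR(4) \<open>card (vcut Y R) \<le> 1\<close> by simp
  qed
  obtain vs es where P: "vpath V E ends Y vs es" "hd vs = x" "last vs = u" "p \<notin> set es"
    using reach_path[of x u Y p] uR xY unfolding R_def A_def by auto
  have vsne: "vs \<noteq> []" and L: "length vs = length es + 1" and dvs: "distinct vs"
    using P(1) unfolding vpath_def by auto
  show ?thesis
  proof (cases "v \<in> set vs")
    case False
    have "vpath V E ends Y (vs @ [v]) (es @ [e])" using vpath_snoc[OF P(1) False uvY(2) assms(7)] uv P(3) by simp
    moreover have "hd (vs @ [v]) = x" "es @ [e] \<noteq> []" "p \<notin> set (es @ [e])" "last (es @ [e]) = e"
      using P vsne assms(8) by auto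
    ultimately show ?thesis by blast
  next
    case True
    then obtain i where i: "i < length vs" "vs ! i = v" by (auto simp: in_set_conv_nth)
    have "i \<noteq> length vs - 1" using i P(3) uv vsne by (metis last_conv_nth)
    hence si: "Suc i < length vs" using i by auto
    let ?vs = "take (Suc i) vs" and ?es = "take i es"
    have P1: "vpath V E ends Y ?vs ?es" using vpath_take[OF P(1) i(1)] .
    have lv: "last ?vs = v" using i by (simp add: take_Suc_conv_app_nth)
    have "u \<in> set (drop (Suc i) vs)"
    proof -
      have "drop (Suc i) vs \<noteq> []" using si by simp
      hence "last (drop (Suc i) vs) = u" using P(3) si by (simp add: last_drop)
      thus ?thesis using \<open>drop (Suc i) vs \<noteq> []\<close> last_in_set by metis
    qed
    hence nu: "u \<notin> set ?vs" using dvs by (metis append_take_drop_id distinct_append disjoint_iff)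
    have "vpath V E ends Y (?vs @ [u]) (?es @ [e])"
      using vpath_snoc[OF P1 nu uvY(1) assms(7)] uv lv by (simp add: insert_commute)
    moreover have "hd (?vs @ [u]) = x" using P(2) vsne by (cases vs) auto
    moreover have "p \<notin> set (?es @ [e])" using P(4) assms(8) by (auto dest: in_set_takeD)
    moreover have "?es @ [e] \<noteq> []" "last (?es @ [e]) = e" by auto
    ultimately show ?thesis by blast
  qed
qed

end
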